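(* Let $a\in\mathbb{Z}$ and $m\in\mathbb{Z}$ with $m>0$, and let $s$, $m_s$, $a_0$, $d_i$, $d_i^1$ be as in the context. Then: (i) $a=a_0\,d_0^1d_1^1\cdots d_{s-1}^1$; (ii) $m=d_0d_1\cdots d_{s-1}\,m_s=(d_0^1)^1(d_1^1)^2(d_2^1)^3\cdots(d_{s-1}^1)^s\,m_s$, so in particular $m_s\mid m$; (iii) $\gcd(a_0,m_s)=1$ and $\gcd(d_i^1,m_s)=1$ for all $0\le i\le s-1$; consequently $\gcd(a,m_s)=1$ and $a^{\varphi(m_s)}\equiv 1\pmod{m_s}$.
   Context: $\gcd$ denotes the greatest common divisor, always chosen positive, with the convention $\gcd(0,n)=n$ for $n>0$. $\varphi$ denotes Euler's totient function. Let $a\in\mathbb{Z}$ and $m\in\mathbb{Z}$ with $m>0$. The sequences are defined as follows. - Put $d_0=\gcd(a,m)$, $a_0=a/d_0$ and $m_0=m/d_0$. - For $i\ge 1$, and only as long as $d_{i-1}\neq 1$, put $d_i=\gcd(d_{i-1},m_{i-1})$, $m_i=m_{i-1}/d_i$ and $d_{i-1}^1=d_{i-1}/d_i$. The index $s\ge 0$ is the least index with $d_s=1$; such an index exists. Empty products equal $1$, so when $s=0$ the statements read $a=a_0$ and $m=m_0$. *)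

theory Defs
  imports "HOL-Number_Theory.Number_Theory"
begin

text \<open>The pair (d_i, m_i). The recursion is defined for all i; once d_{i-1} = 1
  it continues with d_i = gcd 1 _ = 1, m_i = m_{i-1}, which does not affect
  any index below the least s with d_s = 1.\<close>
fun dm_seq :: "int \<Rightarrow> int \<Rightarrow> nat \<Rightarrow> int \<times> int" where
  "dm_seq a m 0 = (gcd a m, m div gcd a m)"
| "dm_seq a m (Suc i) =
     (let d = fst (dm_seq a m i); mm = snd (dm_seq a m i); d' = gcd d mm
      in (d', mm div d'))"

definition dseq :: "int \<Rightarrow> int \<Rightarrow> nat \<Rightarrow> int" where
  "dseq a m i = fst (dm_seq a m i)"

definition mseq :: "int \<Rightarrow> int \<Rightarrow> nat \<Rightarrow> int" where
  "mseq a m i = snd (dm_seq a m i)"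

definition a0 :: "int \<Rightarrow> int \<Rightarrow> int" where
  "a0 a m = a div gcd a m"

definition d1seq :: "int \<Rightarrow> int \<Rightarrow> nat \<Rightarrow> int" where
  "d1seq a m i = dseq a m i div dseq a m (Suc i)"

definition sidx :: "int \<Rightarrow> int \<Rightarrow> nat" where
  "sidx a m = (LEAST i. dseq a m i = 1)"

end

theory Submission
  imports Defs
begin

lemma D0: "dseq a m 0 = gcd a m" and M0: "mseq a m 0 = m div gcd a m"
  by (simp_all add: dseq_def mseq_def)

lemma DS: "dseq a m (Suc i) = gcd (dseq a m i) (mseq a m i)"
  and MS: "mseq a m (Suc i) = mseq a m i div dseq a m (Suc i)"
  by (simp_all add: dseq_def mseq_def Let_def)

lemma pos: assumes "m > 0" shows "dseq a m i > 0 \<and> mseq a m i > 0"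
proof (induction i)
  case 0
  have "gcd a m > 0" using assms by simp
  moreover have "gcd a m dvd m" by simp
  ultimately have "m div gcd a m > 0" using assms
    by (simp add: pos_imp_zdiv_pos_iff zdvd_imp_le)
  then show ?case using assms by (simp add: D0 M0)
next
  case (Suc i)
  let ?d = "dseq a m (Suc i)" and ?M = "mseq a m i"
  have d: "?d > 0" using Suc by (simp add: DS)
  have "?d dvd ?M" by (simp add: DS)
  then obtain k where k: "?M = ?d * k" by blast
  then have "k > 0" using Suc d by (metis zero_less_mult_pos)
  then show ?case using d k by (simp add: MS)
qed

lemma Dmul: "dseq a m (Suc i) * mseq a m (Suc i) = mseq a m i"
  by (simp add: MS DS)

lemma Ddvd: "dseq a m (Suc i) dvd dseq a m i"
  by (simp add: DS)

lemma Mdvd: "mseq a m (Suc i) dvd mseq a m i"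
  by (metis Dmul dvd_triv_right)

lemma Ddvd0: "dseq a m i dvd dseq a m 0"
  by (induction i) (auto intro: dvd_trans Ddvd)

lemma Mdvd0: "mseq a m i dvd mseq a m 0"
  by (induction i) (auto intro: dvd_trans Mdvd)

lemma d1eq: "dseq a m i = d1seq a m i * dseq a m (Suc i)"
  unfolding d1seq_def using Ddvd by simp

lemma tele: "dseq a m 0 = (\<Prod>i<k. d1seq a m i) * dseq a m k"
proof (induction k)
  case 0 then show ?case by simp
next
  case (Suc k) then show ?case using d1eq[of a m k] by (simp add: mult.assoc)
qed

lemma mprod: "m = (\<Prod>i<Suc k. dseq a m i) * mseq a m k"
proof (induction k)
  case 0 then show ?case by (simp add: D0 M0)
next
  case (Suc k)
  have "m = (\<Prod>i<Suc k. dseq a m i) * (dseq a m (Suc k) * mseq a m (Suc k))"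
    using Suc Dmul by simp
  then show ?case by (simp add: mult.assoc)
qed

lemma dprod: "(\<Prod>i<k. dseq a m i) = (\<Prod>i<k. d1seq a m i ^ (i + 1)) * dseq a m k ^ k"
proof (induction k)
  case 0 then show ?case by simp
next
  case (Suc k)
  have "(\<Prod>i<Suc k. dseq a m i) = (\<Prod>i<k. d1seq a m i ^ (i + 1)) * dseq a m k ^ Suc k"
    using Suc by simp
  also have "\<dots> = (\<Prod>i<k. d1seq a m i ^ (i + 1)) * (d1seq a m k * dseq a m (Suc k)) ^ Suc k"
    using d1eq[of a m k] by simp
  finally show ?case by (simp add: power_mult_distrib mult_ac)
qed

lemma gcdinv: "gcd (dseq a m 0) (mseq a m k) dvd dseq a m k"
proof (induction k)
  case 0 then show ?case by simp
next
  case (Suc k)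
  have "gcd (dseq a m 0) (mseq a m (Suc k)) dvd gcd (dseq a m 0) (mseq a m k)"
    using Mdvd by (meson dvd_trans gcd_dvd1 gcd_dvd2 gcd_greatest)
  then have "gcd (dseq a m 0) (mseq a m (Suc k)) dvd gcd (dseq a m k) (mseq a m k)"
    using Suc by (meson dvd_trans gcd_dvd2 gcd_greatest dvd_trans Mdvd)
  then show ?case by (simp add: DS)
qed

lemma exists1: assumes "m > 0" shows "\<exists>i. dseq a m i = 1"
proof (rule ccontr)
  assume "\<not> ?thesis"
  then have ne: "\<And>i. dseq a m i \<noteq> 1" by blast
  have "mseq a m i + int i \<le> m" for i
  proof (induction i)
    case 0
    have "mseq a m 0 dvd m" unfolding M0 using dvd_triv_left[of "m div gcd a m" "gcd a m"] by simp
    then show ?case using assms by (simp add: zdvd_imp_le)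
  next
    case (Suc i)
    have p1: "dseq a m (Suc i) > 0" "mseq a m (Suc i) > 0" using pos[OF assms, of a "Suc i"] by auto
    have "dseq a m (Suc i) \<ge> 2" using p1 ne[of "Suc i"] by linarith
    then have "2 * mseq a m (Suc i) \<le> dseq a m (Suc i) * mseq a m (Suc i)"
      using p1 by (intro mult_right_mono) auto
    then have "2 * mseq a m (Suc i) \<le> mseq a m i" by (simp only: Dmul)
    then show ?case using Suc p1 by linarith
  qed
  from this[of "nat m"] pos[OF assms, of a "nat m"] assms show False by linarith
qed

theorem mainTheorem4:
  fixes a m :: int
  assumes "m > 0"
  defines "s \<equiv> sidx a m"
  shows "(\<exists>i. dseq a m i = 1)
    \<and> a = a0 a m * (\<Prod>i<s. d1seq a m i)
    \<and> m = (\<Prod>i<s. dseq a m i) * mseq a m s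
    \<and> m = (\<Prod>i<s. d1seq a m i ^ (i + 1)) * mseq a m s
    \<and> mseq a m s dvd m
    \<and> gcd (a0 a m) (mseq a m s) = 1
    \<and> (\<forall>i<s. gcd (d1seq a m i) (mseq a m s) = 1)
    \<and> gcd a (mseq a m s) = 1
    \<and> [a ^ totient (nat (mseq a m s)) = 1] (mod (mseq a m s))"
proof -
  have ex: "\<exists>i. dseq a m i = 1" using exists1[OF assms(1)] .
  have Ds: "dseq a m s = 1" unfolding s_def sidx_def using ex by (rule LeastI_ex)
  have D0P: "dseq a m 0 = (\<Prod>i<s. d1seq a m i)" using tele[of a m s] Ds by simp
  have a_eq: "a = a0 a m * dseq a m 0" by (simp add: a0_def D0)
  have m1: "m = (\<Prod>i<s. dseq a m i) * mseq a m s"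
    using mprod[of m a s] Ds by simp
  have m2: "m = (\<Prod>i<s. d1seq a m i ^ (i + 1)) * mseq a m s"
    using m1 dprod[of a m s] Ds by simp
  have mdvd: "mseq a m s dvd m"
    using m1 dvd_triv_right[of "mseq a m s" "\<Prod>i<s. dseq a m i"] by simp
  have g1: "gcd (dseq a m 0) (mseq a m s) = 1"
    using gcdinv[of a m s] Ds by simp
  then have cD: "coprime (dseq a m 0) (mseq a m s)"
    by (simp only: coprime_iff_gcd_eq_1)
  have ca0: "coprime (a0 a m) (mseq a m s)"
  proof -
    have "a \<noteq> 0 \<or> m \<noteq> 0" using assms by simp
    then have "coprime (a0 a m) (m div gcd a m)" unfolding a0_def by (rule div_gcd_coprime)
    then have "coprime (a0 a m) (mseq a m 0)" by (simp only: M0)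
    then show ?thesis using Mdvd0[of a m s] coprime_divisors[of "a0 a m" "a0 a m" "mseq a m s" "mseq a m 0"]
      by simp
  qed
  have cd1: "\<forall>i<s. coprime (d1seq a m i) (mseq a m s)"
  proof (intro allI impI)
    fix i
    have "d1seq a m i dvd dseq a m i"
      using d1eq[of a m i] dvd_triv_left[of "d1seq a m i" "dseq a m (Suc i)"] by simp
    then have "d1seq a m i dvd dseq a m 0"
      using Ddvd0[of a m i] by (rule dvd_trans)
    then show "coprime (d1seq a m i) (mseq a m s)"
      using cD coprime_divisors[of "d1seq a m i" "dseq a m 0" "mseq a m s" "mseq a m s"] by simp
  qed
  have ca: "coprime a (mseq a m s)"
    using ca0 cD by (subst a_eq) (simp only: coprime_mult_left_iff)
  have Mpos: "mseq a m s > 0" using pos[OF assms(1), of a s] by simp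
  have eul: "[a ^ totient (nat (mseq a m s)) = 1] (mod (mseq a m s))"
  proof (cases "mseq a m s = 1")
    case True then show ?thesis by simp
  next
    case False
    then have "residues (mseq a m s)" using Mpos by (simp add: residues_def)
    then show ?thesis using ca by (rule residues.euler_theorem)
  qed
  have r1: "gcd (a0 a m) (mseq a m s) = 1" using ca0 by (simp only: coprime_iff_gcd_eq_1)
  have r2: "\<forall>i<s. gcd (d1seq a m i) (mseq a m s) = 1" using cd1 by (simp only: coprime_iff_gcd_eq_1)
  have r3: "gcd a (mseq a m s) = 1" using ca by (simp only: coprime_iff_gcd_eq_1)
  have r0: "a = a0 a m * (\<Prod>i<s. d1seq a m i)" using a_eq D0P by simp
  show ?thesis using ex r0 m1 m2 mdvd r1 r2 r3 eul by blast
qed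

end
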